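(* Let $q$ be a prime power and $k,m,n,h,r$ positive integers. If $U$ is an $(h,r)_q$-evasive $[n,k]_{q^m/q}$ system with $r<hm$, then $U$ is $(2h,\,r+hm-1)_q$-evasive, i.e. every $\mathbb F_{q^m}$-subspace $H$ of $\mathbb F_{q^m}^k$ with $\dim_{\mathbb F_{q^m}}(H)=2h$ satisfies $\dim_{\mathbb F_q}(U\cap H)\le r+hm-1$.
   Context: An $[n,k]_{q^m/q}$ system is an $\mathbb F_q$-subspace $U$ of $\mathbb F_{q^m}^k$ with $\dim_{\mathbb F_q}(U)=n$ and $\langle U\rangle_{\mathbb F_{q^m}}=\mathbb F_{q^m}^k$. For positive integers $h<k$ and $r$, $U$ is called $(h,r)_q$-evasive if $\dim_{\mathbb F_q}(U\cap H)\le r$ for every $\mathbb F_{q^m}$-subspace $H$ of $\mathbb F_{q^m}^k$ with $\dim_{\mathbb F_{q^m}}(H)=h$. *)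

theory Defs
  imports "HOL-Analysis.Analysis"
begin

text \<open>The field F_{q^m} is a finite field type 'a; F_q is a subfield K of it.
  Vectors of F_{q^m}^k are elements of 'a^'k with CARD('k) = k.
  F_{q^m}-subspaces and F_{q^m}-dimension are the library notions vec.subspace / vec.dim.\<close>

definition is_subfield :: "'a::field set \<Rightarrow> bool" where
  "is_subfield K \<longleftrightarrow> 0 \<in> K \<and> 1 \<in> K \<and>
     (\<forall>x\<in>K. \<forall>y\<in>K. x + y \<in> K \<and> x * y \<in> K) \<and>
     (\<forall>x\<in>K. - x \<in> K) \<and> (\<forall>x\<in>K. x \<noteq> 0 \<longrightarrow> inverse x \<in> K)"

definition is_prime_power :: "nat \<Rightarrow> bool" where
  "is_prime_power q \<longleftrightarrow> (\<exists>p e. prime p \<and> e > 0 \<and> q = p ^ e)"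

definition Ksubspace :: "'a::field set \<Rightarrow> ('a ^ 'k) set \<Rightarrow> bool" where
  "Ksubspace K U \<longleftrightarrow> 0 \<in> U \<and> (\<forall>x\<in>U. \<forall>y\<in>U. x + y \<in> U) \<and>
     (\<forall>c\<in>K. \<forall>x\<in>U. c *s x \<in> U)"

definition Kindep :: "'a::field set \<Rightarrow> ('a ^ 'k) set \<Rightarrow> bool" where
  "Kindep K B \<longleftrightarrow> (\<forall>T c. finite T \<longrightarrow> T \<subseteq> B \<longrightarrow> (\<forall>v\<in>T. c v \<in> K) \<longrightarrow>
       (\<Sum>v\<in>T. c v *s v) = 0 \<longrightarrow> (\<forall>v\<in>T. c v = 0))"

definition Kdim :: "'a::field set \<Rightarrow> ('a ^ 'k) set \<Rightarrow> nat" where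
  "Kdim K U = Max (card ` {B. B \<subseteq> U \<and> Kindep K B})"

definition is_system :: "'a::field set \<Rightarrow> nat \<Rightarrow> ('a ^ 'k) set \<Rightarrow> bool" where
  "is_system K n U \<longleftrightarrow> Ksubspace K U \<and> Kdim K U = n \<and> vec.span U = UNIV"

text \<open>(h,r)_q-evasive (the standing requirement h < k is imposed separately).\<close>
definition evasive :: "'a::field set \<Rightarrow> nat \<Rightarrow> nat \<Rightarrow> ('a ^ 'k) set \<Rightarrow> bool" where
  "evasive K h r U \<longleftrightarrow>
     (\<forall>H. vec.subspace H \<longrightarrow> vec.dim H = h \<longrightarrow> Kdim K (U \<inter> H) \<le> r)"

end

theory Submission
  imports Defs
begin

lemma subfield_0: "is_subfield K \<Longrightarrow> 0 \<in> K" unfolding is_subfield_def by simp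
lemma subfield_1: "is_subfield K \<Longrightarrow> 1 \<in> K" unfolding is_subfield_def by simp
lemma subfield_add: "is_subfield K \<Longrightarrow> x \<in> K \<Longrightarrow> y \<in> K \<Longrightarrow> x + y \<in> K" unfolding is_subfield_def by simp
lemma subfield_mult: "is_subfield K \<Longrightarrow> x \<in> K \<Longrightarrow> y \<in> K \<Longrightarrow> x * y \<in> K" unfolding is_subfield_def by simp
lemma subfield_neg: "is_subfield K \<Longrightarrow> x \<in> K \<Longrightarrow> - x \<in> K" unfolding is_subfield_def by simp
lemma subfield_inv: "is_subfield K \<Longrightarrow> x \<in> K \<Longrightarrow> inverse x \<in> K"
  unfolding is_subfield_def by (cases "x = 0") auto
lemma subfield_diff: "is_subfield K \<Longrightarrow> x \<in> K \<Longrightarrow> y \<in> K \<Longrightarrow> x - y \<in> K"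
  unfolding is_subfield_def by (metis diff_conv_add_uminus)

lemma Ksub_sum:
  assumes "Ksubspace K V" "finite E" "\<forall>e\<in>E. d e \<in> K \<and> y e \<in> V"
  shows "(\<Sum>e\<in>E. d e *s y e) \<in> V"
  using assms(2,3) by (induction E rule: finite_induct) (use assms(1) in \<open>auto simp: Ksubspace_def\<close>)

lemma Ksub_diff:
  assumes "is_subfield K" "Ksubspace K V" "x \<in> V" "y \<in> V"
  shows "x - y \<in> V"
proof -
  have "- 1 \<in> K" using assms(1) unfolding is_subfield_def by auto
  then have "(- 1) *s y \<in> V" using assms unfolding Ksubspace_def by auto
  then have "x + (- 1) *s y \<in> V" using assms unfolding Ksubspace_def by auto
  moreover have "x + (- 1) *s y = x - y"
    by (simp add: vec_eq_iff)
  ultimately show ?thesis by simp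
qed

lemma group_count:
  fixes A B S :: "('a::field ^ 'k) set"
  assumes K: "is_subfield K" and A: "Ksubspace K A" and B: "Ksubspace K B"
    and S: "\<And>a b. a \<in> A \<Longrightarrow> b \<in> B \<Longrightarrow> a + b \<in> S" and fin: "finite S" "finite (A \<inter> B)"
  shows "card A * card B \<le> card (A \<inter> B) * card S"
proof -
  define r where "r s = (SOME a. a \<in> A \<and> s - a \<in> B)" for s
  have r: "r (a + b) \<in> A \<and> (a + b) - r (a + b) \<in> B" if "a \<in> A" "b \<in> B" for a b
    unfolding r_def by (rule someI[of _ a]) (use that in simp)
  define f where "f p = (fst p - r (fst p + snd p), fst p + snd p)" for p
  have "inj_on f (A \<times> B)"
  proof (rule inj_onI)
    fix p p' assume "p \<in> A \<times> B" "p' \<in> A \<times> B" "f p = f p'"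
    then show "p = p'" unfolding f_def by (cases p, cases p') (auto simp: algebra_simps)
  qed
  moreover have fab: "f (a, b) \<in> (A \<inter> B) \<times> S" if ab: "a \<in> A" "b \<in> B" for a b
  proof -
    have 1: "a - r (a + b) \<in> A" using Ksub_diff[OF K A ab(1)] r[OF ab] by auto
    have "a - r (a + b) = ((a + b) - r (a + b)) - b" by (simp add: algebra_simps)
    also have "\<dots> \<in> B" by (rule Ksub_diff[OF K B]) (use r[OF ab] ab in auto)
    finally show "f (a, b) \<in> (A \<inter> B) \<times> S" using 1 S[OF ab] unfolding f_def by auto
  qed
  then have "f ` (A \<times> B) \<subseteq> (A \<inter> B) \<times> S" unfolding image_subset_iff using fab by blast
  ultimately have "card (A \<times> B) \<le> card ((A \<inter> B) \<times> S)"
    using fin by (intro card_inj_on_le) auto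
  then show ?thesis by (simp add: card_cartesian_product)
qed

definition Kspan :: "'a::field set \<Rightarrow> ('a ^ 'k) set \<Rightarrow> ('a ^ 'k) set" where
  "Kspan K B = (\<lambda>c. \<Sum>v\<in>B. c v *s v) ` (B \<rightarrow>\<^sub>E K)"

lemma card_Kspan_le: "finite K \<Longrightarrow> finite B \<Longrightarrow> card (Kspan K B) \<le> card K ^ card B"
proof -
  assume fK: "finite K" and fB: "finite B"
  have "card (Kspan K B) \<le> card (B \<rightarrow>\<^sub>E K)"
    unfolding Kspan_def using fB fK by (intro card_image_le) (simp add: finite_PiE)
  also have "\<dots> = card K ^ card B" using fB by (simp add: card_PiE)
  finally show ?thesis .
qed

lemma Kspan_subset:
  assumes "Ksubspace K X" "B \<subseteq> X" "finite B"
  shows "Kspan K B \<subseteq> X"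
proof
  fix x assume "x \<in> Kspan K B"
  then obtain c where c: "c \<in> B \<rightarrow>\<^sub>E K" and x: "x = (\<Sum>v\<in>B. c v *s v)"
    unfolding Kspan_def by blast
  have "\<forall>e\<in>B. c e \<in> K \<and> e \<in> X" using c assms(2) by (auto simp: PiE_iff)
  then show "x \<in> X" unfolding x by (rule Ksub_sum[OF assms(1,3)])
qed

lemma in_Kspan:
  assumes "is_subfield K" "finite B" "v \<in> B"
  shows "v \<in> Kspan K B"
proof -
  let ?c = "restrict (\<lambda>w. if w = v then 1 else 0) B"
  have 01: "0 \<in> K" "1 \<in> K" using assms(1) unfolding is_subfield_def by simp_all
  have cK: "?c \<in> B \<rightarrow>\<^sub>E K" using 01 by (simp add: restrict_PiE_iff)
  have eq: "(\<Sum>w\<in>B. ?c w *s w) = v"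
  proof -
    have "(\<Sum>w\<in>B. ?c w *s w) = (\<Sum>w\<in>B. (if w = v then v else 0))"
      by (rule sum.cong) auto
    also have "\<dots> = v" using assms(2,3) by (simp add: sum.delta)
    finally show ?thesis .
  qed
  show ?thesis unfolding Kspan_def by (rule image_eqI[where f="\<lambda>c. \<Sum>v\<in>B. c v *s v", OF eq[symmetric] cK])
qed

lemma card_indep_ge:
  fixes X :: "('a::field ^ 'k) set"
  assumes K: "is_subfield K" and X: "Ksubspace K X" "finite X"
    and B: "B \<subseteq> X" "Kindep K B"
  shows "card K ^ card B \<le> card X"
proof -
  have fB: "finite B" using B X finite_subset by blast
  let ?f = "\<lambda>c. \<Sum>v\<in>B. c v *s v"
  have inj: "inj_on ?f (B \<rightarrow>\<^sub>E K)"
  proof (rule inj_onI)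
    fix c c' assume c: "c \<in> B \<rightarrow>\<^sub>E K" "c' \<in> B \<rightarrow>\<^sub>E K" and eq: "?f c = ?f c'"
    have "(\<Sum>v\<in>B. (c v - c' v) *s v) = ?f c - ?f c'"
      by (simp add: vec.scale_left_diff_distrib sum_subtractf)
    also have "\<dots> = 0" using eq by simp
    finally have z: "(\<Sum>v\<in>B. (c v - c' v) *s v) = 0" .
    have "\<forall>v\<in>B. c v - c' v \<in> K" using c subfield_diff[OF K] by (auto simp: PiE_iff)
    have KI: "\<And>T d. finite T \<Longrightarrow> T \<subseteq> B \<Longrightarrow> (\<forall>v\<in>T. d v \<in> K) \<Longrightarrow> (\<Sum>v\<in>T. d v *s v) = 0 \<Longrightarrow> \<forall>v\<in>T. d v = 0"
      using B(2) unfolding Kindep_def by blast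
    have "\<forall>v\<in>B. c v - c' v = 0"
      by (rule KI[OF fB order_refl]) fact+
    then show "c = c'" using c by (intro PiE_ext[of c B "\<lambda>_. K" c']) auto
  qed
  have "card K ^ card B = card (B \<rightarrow>\<^sub>E K)" using fB by (simp add: card_PiE)
  also have "\<dots> = card (?f ` (B \<rightarrow>\<^sub>E K))" using inj by (simp add: card_image)
  also have "\<dots> \<le> card X"
    using Kspan_subset[OF X(1) B(1) fB] X(2) unfolding Kspan_def by (intro card_mono) simp_all
  finally show ?thesis .
qed

lemma indep_insert:
  fixes B :: "('a::field ^ 'k) set"
  assumes K: "is_subfield K" and fB: "finite B" and B: "Kindep K B" and x: "x \<notin> Kspan K B"
  shows "Kindep K (insert x B)"
  unfolding Kindep_def
proof (intro allI impI)
  fix T c assume T: "finite T" "T \<subseteq> insert x B" and cK: "\<forall>v\<in>T. c v \<in> K"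
    and s: "(\<Sum>v\<in>T. c v *s v) = 0"
  have xB: "x \<notin> B" using x in_Kspan[OF K fB] by blast
  show "\<forall>v\<in>T. c v = 0"
  proof (cases "x \<in> T")
    case False
    then have "T \<subseteq> B" using T by auto
    have KI: "\<And>T d. finite T \<Longrightarrow> T \<subseteq> B \<Longrightarrow> (\<forall>v\<in>T. d v \<in> K) \<Longrightarrow> (\<Sum>v\<in>T. d v *s v) = 0 \<Longrightarrow> \<forall>v\<in>T. d v = 0"
      using B unfolding Kindep_def by blast
    show ?thesis using KI[OF T(1) \<open>T \<subseteq> B\<close> cK s] .
  next
    case True
    let ?T = "T - {x}"
    have TB: "?T \<subseteq> B" using T by auto
    have s2: "c x *s x + (\<Sum>v\<in>?T. c v *s v) = 0"
      using s by (simp add: sum.remove[OF T(1) True])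
    have cx: "c x = 0"
    proof (rule ccontr)
      assume nz: "c x \<noteq> 0"
      let ?d = "restrict (\<lambda>v. if v \<in> ?T then - c v / c x else 0) B"
      have dK: "?d \<in> B \<rightarrow>\<^sub>E K"
      proof -
        have dv: "- c v / c x \<in> K" if "v \<in> ?T" for v
        proof -
          have "c v \<in> K" "c x \<in> K" using cK that True by auto
          then have "- c v * inverse (c x) \<in> K" by (intro subfield_mult[OF K] subfield_neg[OF K] subfield_inv[OF K])
          then show ?thesis by (simp add: divide_inverse)
        qed
        have z: "0 \<in> K" using subfield_0[OF K] .
        have "(if v \<in> ?T then - c v / c x else 0) \<in> K" for v
        proof (cases "v \<in> ?T")
          case True then show ?thesis using dv[OF True] by (simp only: if_True)
        next
          case False then show ?thesis using z by (simp only: if_False)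
        qed
        then show ?thesis unfolding restrict_PiE_iff by blast
      qed
      have "(\<Sum>v\<in>B. ?d v *s v) = (\<Sum>v\<in>?T. (- c v / c x) *s v)"
        by (rule sum.mono_neutral_cong_right[OF fB TB]) (use TB in auto)
      also have "\<dots> = (\<Sum>v\<in>?T. (- inverse (c x) * c v) *s v)"
        by (rule sum.cong) (simp_all add: divide_inverse mult.commute)
      also have "\<dots> = (- inverse (c x)) *s (\<Sum>v\<in>?T. c v *s v)"
        by (simp add: vec.scale_sum_right)
      also have "(\<Sum>v\<in>?T. c v *s v) = - (c x *s x)" using minus_unique[OF s2] by simp
      also have "(- inverse (c x)) *s (- (c x *s x)) = x" using nz by (simp add: vec_eq_iff)
      finally have eqx: "(\<Sum>v\<in>B. ?d v *s v) = x" .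
      have "x \<in> Kspan K B" unfolding Kspan_def
        by (rule image_eqI[where f="\<lambda>c. \<Sum>v\<in>B. c v *s v", OF eqx[symmetric] dK])
      then show False using x by simp
    qed
    then have "(\<Sum>v\<in>?T. c v *s v) = 0" using s2 by simp
    have KI: "\<And>T d. finite T \<Longrightarrow> T \<subseteq> B \<Longrightarrow> (\<forall>v\<in>T. d v \<in> K) \<Longrightarrow> (\<Sum>v\<in>T. d v *s v) = 0 \<Longrightarrow> \<forall>v\<in>T. d v = 0"
      using B unfolding Kindep_def by blast
    have fT: "finite ?T" using T(1) by simp
    have cT: "\<forall>v\<in>?T. c v \<in> K" using cK by simp
    have "\<forall>v\<in>?T. c v = 0" using KI[OF fT TB cT \<open>(\<Sum>v\<in>?T. c v *s v) = 0\<close>] .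
    then show ?thesis using cx by auto
  qed
qed

lemma Kdim_props:
  fixes X :: "('a::{field,finite} ^ 'k) set"
  shows "\<exists>B. B \<subseteq> X \<and> Kindep K B \<and> card B = Kdim K X"
    and "B \<subseteq> X \<Longrightarrow> Kindep K B \<Longrightarrow> card B \<le> Kdim K X"
proof -
  let ?S = "{B. B \<subseteq> X \<and> Kindep K B}"
  have fin: "finite (card ` ?S)" by (intro finite_imageI) simp
  have ne: "{} \<in> ?S" unfolding Kindep_def by simp
  then have ne2: "card ` ?S \<noteq> {}" by blast
  have "Kdim K X \<in> card ` ?S" unfolding Kdim_def by (rule Max_in[OF fin ne2])
  then show "\<exists>B. B \<subseteq> X \<and> Kindep K B \<and> card B = Kdim K X" by auto
  show "B \<subseteq> X \<Longrightarrow> Kindep K B \<Longrightarrow> card B \<le> Kdim K X"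
    unfolding Kdim_def by (rule Max_ge[OF fin]) simp
qed

lemma Kbasis:
  fixes X :: "('a::{field,finite} ^ 'k) set"
  assumes K: "is_subfield K" and X: "Ksubspace K X"
  shows "\<exists>B. B \<subseteq> X \<and> Kindep K B \<and> card B = Kdim K X \<and> X \<subseteq> Kspan K B"
proof -
  obtain B where B: "B \<subseteq> X" "Kindep K B" "card B = Kdim K X" using Kdim_props(1) by blast
  have "X \<subseteq> Kspan K B"
  proof
    fix x assume xX: "x \<in> X"
    show "x \<in> Kspan K B"
    proof (rule ccontr)
      assume nx: "x \<notin> Kspan K B"
      have fB: "finite B" by simp
      have "x \<notin> B" using nx in_Kspan[OF K fB] by blast
      have "Kindep K (insert x B)" by (rule indep_insert[OF K fB B(2) nx])
      then have "card (insert x B) \<le> Kdim K X" using Kdim_props(2) B(1) xX by blast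
      then show False using \<open>x \<notin> B\<close> B(3) by simp
    qed
  qed
  then show ?thesis using B by blast
qed

lemma card_Ksubspace:
  fixes X :: "('a::{field,finite} ^ 'k) set"
  assumes K: "is_subfield K" and X: "Ksubspace K X"
  shows "card X = card K ^ Kdim K X"
proof -
  obtain B where B: "B \<subseteq> X" "Kindep K B" "card B = Kdim K X" "X \<subseteq> Kspan K B"
    using Kbasis[OF K X] by blast
  have "card X \<le> card (Kspan K B)" using B(4) by (intro card_mono) auto
  also have "\<dots> \<le> card K ^ card B" by (rule card_Kspan_le) simp_all
  finally have "card X \<le> card K ^ Kdim K X" using B(3) by simp
  moreover have "card K ^ Kdim K X \<le> card X"
    using card_indep_ge[OF K X _ B(1,2)] B(3) by simp
  ultimately show ?thesis by simp
qed

lemma subfield_UNIV: "is_subfield (UNIV :: 'a::field set)"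
  unfolding is_subfield_def by simp

lemma Ksubspace_UNIV: "Ksubspace UNIV S \<longleftrightarrow> vec.subspace S"
  unfolding Ksubspace_def vec.subspace_def by simp

lemma vsub_Ksub: "vec.subspace S \<Longrightarrow> Ksubspace K S"
  unfolding Ksubspace_def vec.subspace_def by simp

lemma Ksub_Int: "Ksubspace K A \<Longrightarrow> Ksubspace K B \<Longrightarrow> Ksubspace K (A \<inter> B)"
  unfolding Ksubspace_def by simp

lemma Kindep_UNIV:
  fixes B :: "('a::{field,finite} ^ 'k) set"
  shows "Kindep UNIV B \<longleftrightarrow> vec.independent B"
proof
  assume KI: "Kindep UNIV B"
  show "vec.independent B"
    unfolding vec.independent_explicit
  proof (intro conjI allI impI)
    show "finite B" by simp
    fix c assume s: "(\<Sum>v\<in>B. c v *s v) = 0"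
    have KI': "\<And>T d. finite T \<Longrightarrow> T \<subseteq> B \<Longrightarrow> (\<forall>v\<in>T. d v \<in> UNIV) \<Longrightarrow> (\<Sum>v\<in>T. d v *s v) = 0 \<Longrightarrow> \<forall>v\<in>T. d v = 0"
      using KI unfolding Kindep_def by blast
    show "\<forall>v\<in>B. c v = 0" by (rule KI'[OF finite order_refl _ s]) simp
  qed
next
  assume I: "vec.independent B"
  show "Kindep UNIV B" unfolding Kindep_def
  proof (intro allI impI)
    fix T c assume T: "finite T" "T \<subseteq> B" and s: "(\<Sum>v\<in>T. c v *s v) = 0"
    let ?c = "\<lambda>v. if v \<in> T then c v else 0"
    have "(\<Sum>v\<in>B. ?c v *s v) = (\<Sum>v\<in>T. c v *s v)"
      by (rule sum.mono_neutral_cong_right) (use T in auto)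
    then have s0: "(\<Sum>v\<in>B. ?c v *s v) = 0" using s by simp
    have IE: "\<And>c. (\<Sum>v\<in>B. c v *s v) = 0 \<Longrightarrow> \<forall>v\<in>B. c v = 0"
      using I unfolding vec.independent_explicit by blast
    have "\<forall>v\<in>B. ?c v = 0" by (rule IE[OF s0])
    then show "\<forall>v\<in>T. c v = 0" using T by (metis (full_types) subsetD)
  qed
qed

lemma Kdim_UNIV:
  fixes S :: "('a::{field,finite} ^ 'k) set"
  shows "Kdim UNIV S = vec.dim S"
proof (rule antisym)
  obtain B where B: "B \<subseteq> S" "Kindep UNIV B" "card B = Kdim UNIV S" using Kdim_props(1) by blast
  have "card B \<le> vec.dim S"
    by (rule vec.independent_card_le_dim[OF B(1) Kindep_UNIV[THEN iffD1, OF B(2)]])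
  then show "Kdim UNIV S \<le> vec.dim S" using B(3) by simp
next
  obtain B where B: "B \<subseteq> S" "vec.independent B" "S \<subseteq> vec.span B" "card B = vec.dim S"
    by (rule vec.basis_exists)
  then show "vec.dim S \<le> Kdim UNIV S"
    using Kdim_props(2)[of B S UNIV, OF B(1) Kindep_UNIV[THEN iffD2, OF B(2)]] B(4) by simp
qed

lemma card_vsubspace:
  fixes S :: "('a::{field,finite} ^ 'k) set"
  assumes "vec.subspace S"
  shows "card S = CARD('a) ^ vec.dim S"
  using card_Ksubspace[OF subfield_UNIV, of S] assms by (simp add: Ksubspace_UNIV Kdim_UNIV)

lemma scalar_span:
  fixes K :: "'a::{field,finite} set"
  assumes K: "is_subfield K" and cK: "card K = q" and q: "q \<ge> 2" and cA: "CARD('a) = q ^ m"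
  shows "\<exists>(E :: ('a ^ 1) set) g. card E = m \<and>
           (\<forall>a. \<exists>d. (\<forall>e\<in>E. d e \<in> K) \<and> a = (\<Sum>e\<in>E. d e * g e))"
proof -
  define v0 :: "'a ^ 1" where "v0 = (\<chi> i. 1)"
  define L where "L = range (\<lambda>a::'a. a *s v0)"
  have inj0: "inj (\<lambda>a::'a. a *s v0)"
    by (rule injI) (simp add: v0_def vec_eq_iff)
  have LK: "Ksubspace K L"
    unfolding Ksubspace_def L_def
  proof (intro conjI ballI)
    show "0 \<in> range (\<lambda>a. a *s v0)" by (rule range_eqI[of _ _ 0]) simp
    fix x y assume "x \<in> range (\<lambda>a. a *s v0)" "y \<in> range (\<lambda>a. a *s v0)"
    then obtain a b where "x = a *s v0" "y = b *s v0" by blast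
    then show "x + y \<in> range (\<lambda>a. a *s v0)"
      by (intro range_eqI[of _ _ "a + b"]) (simp add: vec.scale_left_distrib)
  next
    fix c x assume "x \<in> range (\<lambda>a. a *s v0)"
    then obtain a where "x = a *s v0" by blast
    then show "c *s x \<in> range (\<lambda>a. a *s v0)"
      by (intro range_eqI[of _ _ "c * a"]) simp
  qed
  have "card L = CARD('a)" unfolding L_def using card_image[OF inj0] by simp
  then have "q ^ Kdim K L = q ^ m" using card_Ksubspace[OF K LK] cK cA by simp
  then have dimL: "Kdim K L = m" using q by (simp add: power_inject_exp)
  obtain B where B: "B \<subseteq> L" "Kindep K B" "card B = Kdim K L" "L \<subseteq> Kspan K B"
    using Kbasis[OF K LK] by blast
  have rep: "\<exists>d. (\<forall>e\<in>B. d e \<in> K) \<and> a = (\<Sum>e\<in>B. d e * e $ 1)" for a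
  proof -
    have "a *s v0 \<in> L" unfolding L_def by (rule rangeI)
    then have "a *s v0 \<in> Kspan K B" using B(4) by (rule subsetD[rotated])
    then obtain d where d: "d \<in> B \<rightarrow>\<^sub>E K" "a *s v0 = (\<Sum>v\<in>B. d v *s v)"
      unfolding Kspan_def by blast
    have "a = (a *s v0) $ 1" by (simp add: v0_def)
    also have "\<dots> = (\<Sum>v\<in>B. d v * v $ 1)" using d(2) by simp
    finally have "a = (\<Sum>v\<in>B. d v * v $ 1)" .
    moreover have "\<forall>e\<in>B. d e \<in> K" using d(1) by (simp add: PiE_iff)
    ultimately show ?thesis by blast
  qed
  have cB: "card B = m" using B(3) dimL by simp
  have allrep: "\<forall>a. \<exists>d. (\<forall>e\<in>B. d e \<in> K) \<and> a = (\<Sum>e\<in>B. d e * e $ 1)" using rep by blast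
  show ?thesis by (rule exI[of _ B], rule exI[of _ "\<lambda>e. e $ 1"], rule conjI[OF cB allrep])
qed

lemma Ksub_pre:
  fixes H V :: "('a::field ^ 'k) set" and g :: "'i \<Rightarrow> 'a"
  assumes H: "vec.subspace H" and V: "Ksubspace K V"
  shows "Ksubspace K {x\<in>H. \<forall>i\<in>I. g i *s x \<in> V}"
proof -
  have V0: "0 \<in> V" and Vadd: "\<And>x y. x \<in> V \<Longrightarrow> y \<in> V \<Longrightarrow> x + y \<in> V"
    and Vsc: "\<And>c x. c \<in> K \<Longrightarrow> x \<in> V \<Longrightarrow> c *s x \<in> V"
    using V unfolding Ksubspace_def by blast+
  show ?thesis
  unfolding Ksubspace_def
proof (intro conjI ballI)
  show "0 \<in> {x\<in>H. \<forall>i\<in>I. g i *s x \<in> V}" using V0 vec.subspace_0[OF H] by simp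
  fix x y assume x: "x \<in> {x\<in>H. \<forall>i\<in>I. g i *s x \<in> V}" and y: "y \<in> {x\<in>H. \<forall>i\<in>I. g i *s x \<in> V}"
  have "x + y \<in> H" using x y vec.subspace_add[OF H] by simp
  moreover have "g i *s (x + y) \<in> V" if "i \<in> I" for i
    using Vadd[of "g i *s x" "g i *s y"] x y that by (simp add: vec.scale_right_distrib)
  ultimately show "x + y \<in> {x\<in>H. \<forall>i\<in>I. g i *s x \<in> V}" by simp
next
  fix c x assume c: "c \<in> K" and x: "x \<in> {x\<in>H. \<forall>i\<in>I. g i *s x \<in> V}"
  have "c *s x \<in> H" using x vec.subspace_scale[OF H] by simp
  moreover have "g i *s (c *s x) \<in> V" if "i \<in> I" for i
  proof -
    have e: "g i *s (c *s x) = c *s (g i *s x)" by (simp add: mult.commute)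
    have "c *s (g i *s x) \<in> V" using Vsc[OF c, of "g i *s x"] x that by blast
    then show ?thesis unfolding e .
  qed
  ultimately show "c *s x \<in> {x\<in>H. \<forall>i\<in>I. g i *s x \<in> V}" by simp
qed
qed

lemma inter_count:
  fixes H V :: "('a::{field,finite} ^ 'k) set" and g :: "'i \<Rightarrow> 'a"
  assumes K: "is_subfield K" and H: "vec.subspace H" and V: "Ksubspace K V" "V \<subseteq> H"
    and I: "finite I"
  shows "card H * card V ^ card I \<le> card {x\<in>H. \<forall>i\<in>I. g i *s x \<in> V} * card H ^ card I"
  using I
proof (induction I rule: finite_induct)
  case empty
  show ?case by simp
next
  case (insert j I)
  let ?A = "{x\<in>H. \<forall>i\<in>I. g i *s x \<in> V}"
  let ?B = "{x\<in>H. \<forall>i\<in>{j}. g i *s x \<in> V}"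
  have eq: "{x\<in>H. \<forall>i\<in>insert j I. g i *s x \<in> V} = ?A \<inter> ?B" by auto
  have KA: "Ksubspace K ?A" by (rule Ksub_pre[OF H V(1)])
  have KB: "Ksubspace K ?B" by (rule Ksub_pre[OF H V(1)])
  have cB: "card V \<le> card ?B"
  proof (cases "g j = 0")
    case True
    then have "?B = H" using V unfolding Ksubspace_def by auto
    then show ?thesis using V(2) by (simp add: card_mono)
  next
    case False
    have sub: "(\<lambda>v. inverse (g j) *s v) ` V \<subseteq> ?B"
    proof
      fix y assume "y \<in> (\<lambda>v. inverse (g j) *s v) ` V"
      then obtain v where v: "v \<in> V" "y = inverse (g j) *s v" by blast
      have "y \<in> H" using v V(2) vec.subspace_scale[OF H] by auto
      moreover have "g j *s y = v" using v(2) False by simp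
      ultimately show "y \<in> ?B" using v(1) by simp
    qed
    have "inj_on (\<lambda>v. inverse (g j) *s v) V"
      by (rule inj_onI) (use False in simp)
    then have "card V = card ((\<lambda>v. inverse (g j) *s v) ` V)" by (simp add: card_image)
    also have "\<dots> \<le> card ?B" using sub by (simp add: card_mono)
    finally show ?thesis .
  qed
  have grp: "card ?A * card ?B \<le> card (?A \<inter> ?B) * card H"
    by (rule group_count[OF K KA KB]) (auto intro: vec.subspace_add[OF H])
  have "card H * card V ^ card (insert j I) = (card H * card V ^ card I) * card V"
    using insert by simp
  also have "\<dots> \<le> (card ?A * card H ^ card I) * card V"
    using insert.IH by (rule mult_le_mono1)
  also have "\<dots> \<le> (card ?A * card H ^ card I) * card ?B"
    using cB by (rule mult_le_mono2)
  also have "\<dots> = (card ?A * card ?B) * card H ^ card I" by simp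
  also have "\<dots> \<le> (card (?A \<inter> ?B) * card H) * card H ^ card I"
    using grp by (rule mult_le_mono1)
  also have "\<dots> = card {x\<in>H. \<forall>i\<in>insert j I. g i *s x \<in> V} * card H ^ card (insert j I)"
    using insert eq by simp
  finally show ?case .
qed

lemma grow_V:
  fixes K :: "'a::{field,finite} set" and W H :: "('a ^ 'k) set"
  assumes K: "is_subfield K" "card K = q" and q: "q \<ge> 2" and h: "h > 0"
    and H: "vec.subspace H" and W: "Ksubspace K W" "W \<subseteq> H"
  shows "\<exists>V. Ksubspace K V \<and> W \<subseteq> V \<and> V \<subseteq> H \<and> card H \<le> card V * q ^ h \<and>
             (V = W \<or> card V < card H)"
proof (cases "card H \<le> card W * q ^ h")
  case True
  then show ?thesis using W by blast
next
  case False
  have qh: "q \<le> q ^ h" using h q by (simp add: self_le_power)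
  let ?P = "\<lambda>V. Ksubspace K V \<and> W \<subseteq> V \<and> V \<subseteq> H \<and> card V * q ^ h < q * card H"
  have PW: "?P W"
  proof -
    have "card W * q ^ h < card H" using False by simp
    also have "\<dots> \<le> q * card H" using q by simp
    finally show ?thesis using W by simp
  qed
  have bnd: "\<forall>V. ?P V \<longrightarrow> card V < card H + 1"
    by (simp add: card_mono le_imp_less_Suc)
  obtain V where PV: "?P V" and mx: "\<And>V'. ?P V' \<Longrightarrow> card V' \<le> card V"
    using ex_has_greatest_nat[of ?P W card "card H + 1", OF PW bnd] by blast
  have KV: "Ksubspace K V" and WV: "W \<subseteq> V" and VH: "V \<subseteq> H" and cV: "card V * q ^ h < q * card H"
    using PV by auto
  have V0: "0 \<in> V" and Vadd: "\<And>x y. x \<in> V \<Longrightarrow> y \<in> V \<Longrightarrow> x + y \<in> V"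
    and Vsc: "\<And>c x. c \<in> K \<Longrightarrow> x \<in> V \<Longrightarrow> c *s x \<in> V"
    using KV unfolding Ksubspace_def by blast+
  have ge: "card H \<le> card V * q ^ h"
  proof (rule ccontr)
    assume "\<not> card H \<le> card V * q ^ h"
    then have lt: "card V * q ^ h < card H" by simp
    have "V \<noteq> H"
    proof
      assume "V = H"
      then have "card H * q ^ h < card H * 1" using lt by simp
      moreover have "1 \<le> q ^ h" using q by simp
      ultimately show False by (metis mult_le_mono2 not_le)
    qed
    then obtain x where x: "x \<in> H" "x \<notin> V" using VH by blast
    define V' where "V' = (\<lambda>p. fst p *s x + snd p) ` (K \<times> V)"
    have KV': "Ksubspace K V'"
      unfolding Ksubspace_def
    proof (intro conjI ballI)
      show "0 \<in> V'" unfolding V'_def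
        by (rule image_eqI[of _ _ "(0, 0)"]) (use subfield_0[OF K(1)] V0 in simp_all)
      fix y z assume "y \<in> V'" "z \<in> V'"
      then obtain c v d w where cv: "c \<in> K" "v \<in> V" "y = c *s x + v" and dw: "d \<in> K" "w \<in> V" "z = d *s x + w"
        unfolding V'_def by auto
      have "y + z = (c + d) *s x + (v + w)" using cv dw by (simp add: vec.scale_left_distrib algebra_simps)
      then show "y + z \<in> V'" unfolding V'_def
        by (intro image_eqI[of _ _ "(c + d, v + w)"]) (use subfield_add[OF K(1) cv(1) dw(1)] Vadd[OF cv(2) dw(2)] in simp_all)
    next
      fix e y assume e: "e \<in> K" and "y \<in> V'"
      then obtain c v where cv: "c \<in> K" "v \<in> V" "y = c *s x + v"
        unfolding V'_def by auto
      have "e *s y = (e * c) *s x + e *s v" using cv by (simp add: vec.scale_right_distrib)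
      then show "e *s y \<in> V'" unfolding V'_def
        by (intro image_eqI[of _ _ "(e * c, e *s v)"]) (use subfield_mult[OF K(1) e cv(1)] Vsc[OF e cv(2)] in simp_all)
    qed
    have VV': "V \<subseteq> V'"
    proof
      fix v assume "v \<in> V"
      then show "v \<in> V'" unfolding V'_def
        by (intro image_eqI[of _ _ "(0, v)"]) (use subfield_0[OF K(1)] in simp_all)
    qed
    have xV': "x \<in> V'" unfolding V'_def
      by (intro image_eqI[of _ _ "(1, 0)"]) (use subfield_1[OF K(1)] V0 in simp_all)
    have V'H: "V' \<subseteq> H"
    proof
      fix y assume "y \<in> V'"
      then obtain c v where cv: "c \<in> K" "v \<in> V" "y = c *s x + v"
        unfolding V'_def by auto
      show "y \<in> H" unfolding cv(3)
        by (intro vec.subspace_add[OF H] vec.subspace_scale[OF H]) (use x cv VH in auto)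
    qed
    have "card V' \<le> card (K \<times> V)" unfolding V'_def by (rule card_image_le) simp
    also have "\<dots> = q * card V" using K(2) by (simp add: card_cartesian_product)
    finally have cV': "card V' \<le> q * card V" .
    have "card V' * q ^ h \<le> q * (card V * q ^ h)" using cV' by (metis mult.assoc mult_le_mono1)
    also have "\<dots> < q * card H" using lt q by simp
    finally have "?P V'" using KV' WV VV' V'H by auto
    then have "card V' \<le> card V" by (rule mx)
    moreover have "card V < card V'"
      by (rule psubset_card_mono) (use VV' xV' x(2) in auto)
    ultimately show False by simp
  qed
  have "card V * q ^ h < q ^ h * card H" using cV qh
    by (meson less_le_trans mult_le_mono1)
  then have "card V < card H" using q by (simp add: mult.commute)
  then show ?thesis using KV WV VH ge by blast
qed

lemma find_H1:
  fixes K :: "'a::{field,finite} set" and W H :: "('a ^ 'k) set"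
  assumes K: "is_subfield K" "card K = q" and q: "q \<ge> 2" and cA: "CARD('a) = q ^ m" and m: "m > 0"
    and H: "vec.subspace H" "vec.dim H = 2 * h" and W: "Ksubspace K W" "W \<subseteq> H"
    and cW: "q ^ (r + h * m) \<le> card W" and rhm: "r < h * m" and h: "h > 0"
  shows "\<exists>H1. vec.subspace H1 \<and> H1 \<subseteq> H \<and> vec.dim H1 = h \<and> q ^ r < card (W \<inter> H1)"
proof -
  define N where "N = h * m"
  have q1: "1 < q" using q by simp
  have cH: "card H = q ^ N * q ^ N"
  proof -
    have "card H = (q ^ m) ^ (2 * h)" using card_vsubspace[OF H(1)] H(2) cA by simp
    also have "\<dots> = q ^ (m * (2 * h))" by (simp add: power_mult)
    also have "m * (2 * h) = N + N" unfolding N_def by simp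
    also have "q ^ (N + N) = q ^ N * q ^ N" by (simp add: power_add)
    finally show ?thesis .
  qed
  obtain V where KV: "Ksubspace K V" and WV: "W \<subseteq> V" and VH: "V \<subseteq> H"
    and cV: "card H \<le> card V * q ^ h" and VW: "V = W \<or> card V < card H"
    using grow_V[OF K q h H(1) W] by blast
  have V0: "0 \<in> V" and Vadd: "\<And>x y. x \<in> V \<Longrightarrow> y \<in> V \<Longrightarrow> x + y \<in> V"
    using KV unfolding Ksubspace_def by blast+
  obtain E :: "('a ^ 1) set" and g where cE: "card E = m"
    and rep: "\<And>a. \<exists>d. (\<forall>e\<in>E. d e \<in> K) \<and> a = (\<Sum>e\<in>E. d e * g e)"
    using scalar_span[OF K(1,2) q cA] by blast
  have fE: "finite E" by simp
  define M where "M = {x\<in>H. \<forall>e\<in>E. g e *s x \<in> V}"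
  have Mall: "a *s x \<in> V" if x: "x \<in> M" for x a
  proof -
    obtain d where d: "\<forall>e\<in>E. d e \<in> K" "a = (\<Sum>e\<in>E. d e * g e)" using rep by blast
    have "a *s x = (\<Sum>e\<in>E. (d e * g e) *s x)" unfolding d(2) by (rule vec.scale_sum_left)
    also have "\<dots> = (\<Sum>e\<in>E. d e *s (g e *s x))" by simp
    also have "\<dots> \<in> V" by (rule Ksub_sum[OF KV fE]) (use d(1) x in \<open>simp add: M_def\<close>)
    finally show ?thesis .
  qed
  have MH: "M \<subseteq> H" unfolding M_def by auto
  have Msub: "vec.subspace M"
  proof (rule vec.subspaceI)
    show "0 \<in> M" unfolding M_def using V0 vec.subspace_0[OF H(1)] by simp
    fix x y assume x: "x \<in> M" and y: "y \<in> M"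
    have "g e *s (x + y) \<in> V" for e
      using Vadd[OF Mall[OF x, of "g e"] Mall[OF y, of "g e"]] by (simp add: vec.scale_right_distrib)
    then show "x + y \<in> M" using x y vec.subspace_add[OF H(1)] unfolding M_def by simp
  next
    fix c x assume x: "x \<in> M"
    have "g e *s (c *s x) \<in> V" for e using Mall[OF x, of "g e * c"] by simp
    then show "c *s x \<in> M" using x vec.subspace_scale[OF H(1)] unfolding M_def by simp
  qed
  have MV: "M \<subseteq> V" using Mall[of _ 1] by auto
  have ic: "card H * card V ^ m \<le> card M * card H ^ m"
    using inter_count[OF K(1) H(1) KV VH fE, of g] cE unfolding M_def by simp
  have cM: "q ^ N \<le> card M"
  proof -
    have "card H * card H ^ m \<le> card H * (card V * q ^ h) ^ m"
      using cV by (simp add: power_mono)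
    also have "\<dots> = (card H * card V ^ m) * q ^ N"
      unfolding N_def by (simp add: power_mult_distrib power_mult[symmetric] mult.commute)
    also have "\<dots> \<le> (card M * card H ^ m) * q ^ N" using ic by simp
    finally have "card H * card H ^ m \<le> (card M * q ^ N) * card H ^ m" by (simp add: ac_simps)
    moreover have "card H ^ m > 0" using cH q by simp
    ultimately have "card H \<le> card M * q ^ N" by (metis mult_le_cancel2)
    then have "q ^ N * q ^ N \<le> card M * q ^ N" using cH by simp
    then show ?thesis using q by simp
  qed
  have dM: "h \<le> vec.dim M"
  proof -
    have "q ^ (h * m) \<le> q ^ (m * vec.dim M)"
      using cM card_vsubspace[OF Msub] cA unfolding N_def by (simp add: power_mult)
    then have "h * m \<le> m * vec.dim M" using power_le_imp_le_exp[OF q1] by blast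
    then show ?thesis using m by (simp add: mult.commute)
  qed
  obtain B where B: "B \<subseteq> M" "vec.independent B" "M \<subseteq> vec.span B" "card B = vec.dim M"
    by (rule vec.basis_exists)
  obtain B' where B': "B' \<subseteq> B" "card B' = h"
    using obtain_subset_with_card_n[of h B] dM B(4) by metis
  define H1 where "H1 = vec.span B'"
  have indB': "vec.independent B'" using vec.independent_mono[OF B(2) B'(1)] .
  have H1sub: "vec.subspace H1" unfolding H1_def by (rule vec.subspace_span)
  have dH1: "vec.dim H1 = h" unfolding H1_def using vec.dim_span_eq_card_independent[OF indB'] B'(2) by simp
  have H1M: "H1 \<subseteq> M" unfolding H1_def by (rule vec.span_minimal) (use B B' Msub in auto)
  have cH1: "card H1 = q ^ N" using card_vsubspace[OF H1sub] dH1 cA unfolding N_def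
    by (simp add: power_mult[symmetric] mult.commute)
  have "q ^ r < card (W \<inter> H1)"
  proof (cases "V = W")
    case True
    then have "W \<inter> H1 = H1" using H1M MV by auto
    moreover have "q ^ r < q ^ N" using rhm q1 unfolding N_def by (rule power_strict_increasing)
    ultimately show ?thesis using cH1 by simp
  next
    case False
    then have cVH: "card V < q ^ N * q ^ N" using VW cH by simp
    have KH1: "Ksubspace K H1" by (rule vsub_Ksub[OF H1sub])
    have gc: "card W * card H1 \<le> card (W \<inter> H1) * card V"
      by (rule group_count[OF K(1) W(1) KH1]) (use WV H1M MV in \<open>auto intro!: Vadd\<close>)
    have "q ^ r * (q ^ N * q ^ N) = q ^ (r + N) * q ^ N" by (simp add: power_add)
    also have "\<dots> \<le> card W * card H1" using cW cH1 unfolding N_def by simp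
    also have "\<dots> \<le> card (W \<inter> H1) * card V" by (rule gc)
    also have "\<dots> \<le> card (W \<inter> H1) * (q ^ N * q ^ N)" using cVH by simp
    finally have le: "q ^ r * (q ^ N * q ^ N) \<le> card (W \<inter> H1) * (q ^ N * q ^ N)" .
    have ne: "0 \<in> W \<inter> H1" using W(1) vec.subspace_0[OF H1sub] unfolding Ksubspace_def by simp
    then have pos: "card (W \<inter> H1) > 0" by (simp add: card_gt_0_iff) blast
    have "card (W \<inter> H1) * card V < card (W \<inter> H1) * (q ^ N * q ^ N)"
      using cVH pos by simp
    then have "q ^ r * (q ^ N * q ^ N) < card (W \<inter> H1) * (q ^ N * q ^ N)"
      using \<open>q ^ (r + N) * q ^ N \<le> card W * card H1\<close> gc \<open>q ^ r * (q ^ N * q ^ N) = q ^ (r + N) * q ^ N\<close>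
      by linarith
    then show ?thesis by simp
  qed
  then show ?thesis using H1sub H1M MH dH1 by blast
qed

theorem proposition3p2:
  fixes K :: "'a::{field,finite} set" and U :: "('a ^ 'k) set"
    and q m n k h r :: nat
  assumes q: "is_prime_power q"
    and K: "is_subfield K" "card K = q"
    and Fqm: "CARD('a) = q ^ m"
    and dimk: "CARD('k) = k"
    and pos: "k > 0" "m > 0" "n > 0" "h > 0" "r > 0"
    and hk: "h < k"
    and sys: "is_system K n U"
    and ev: "evasive K h r U"
    and rhm: "r < h * m"
  shows "\<forall>H. vec.subspace H \<longrightarrow> vec.dim H = 2 * h \<longrightarrow> Kdim K (U \<inter> H) \<le> r + h * m - 1"
proof (intro allI impI)
  fix H :: "('a ^ 'k) set"
  assume H: "vec.subspace H" "vec.dim H = 2 * h"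
  have q2: "q \<ge> 2"
  proof -
    obtain p e where "prime p" "e > 0" "q = p ^ e" using q unfolding is_prime_power_def by blast
    then have "p \<le> q" using self_le_power[of p e] prime_ge_1_nat[of p] by simp
    moreover have "2 \<le> p" using \<open>prime p\<close> by (rule prime_ge_2_nat)
    ultimately show ?thesis by simp
  qed
  have KU: "Ksubspace K U" using sys unfolding is_system_def by simp
  define W where "W = U \<inter> H"
  have KW: "Ksubspace K W" unfolding W_def by (rule Ksub_Int[OF KU vsub_Ksub[OF H(1)]])
  show "Kdim K (U \<inter> H) \<le> r + h * m - 1"
  proof (rule ccontr)
    assume "\<not> Kdim K (U \<inter> H) \<le> r + h * m - 1"
    then have big: "r + h * m \<le> Kdim K W" unfolding W_def by simp
    have "q ^ (r + h * m) \<le> q ^ Kdim K W" using big q2 by (simp add: power_increasing)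
    also have "\<dots> = card W" using card_Ksubspace[OF K(1) KW] K(2) by simp
    finally have cW: "q ^ (r + h * m) \<le> card W" .
    obtain H1 where H1: "vec.subspace H1" "H1 \<subseteq> H" "vec.dim H1 = h" "q ^ r < card (W \<inter> H1)"
      using find_H1[OF K q2 Fqm pos(2) H KW _ cW rhm pos(4)] unfolding W_def by blast
    have eq: "W \<inter> H1 = U \<inter> H1" using H1(2) unfolding W_def by blast
    have "Kdim K (U \<inter> H1) \<le> r" using ev H1(1,3) unfolding evasive_def by blast
    then have "q ^ Kdim K (U \<inter> H1) \<le> q ^ r" using q2 by (simp add: power_increasing)
    moreover have "card (U \<inter> H1) = q ^ Kdim K (U \<inter> H1)"
      using card_Ksubspace[OF K(1) Ksub_Int[OF KU vsub_Ksub[OF H1(1)]]] K(2) by simp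
    ultimately show False using H1(4) eq by simp
  qed
qed

end
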